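(* $A_4(1,0,0,0,0)$ has a unique rational solution of Type A, namely $(f_0,f_1,f_2,f_3,f_4)=(t,0,0,0,0)$.
   Context: The $A_4^{(1)}$ Painlevé equation $A_4(\alpha_0,\dots,\alpha_4)$ is the system for five functions $f_0,\dots,f_4$ of $t$ (indices in $\mathbb{Z}/5\mathbb{Z}$, ${}'=d/dt$): $f_j'=f_j(f_{j+1}-f_{j+2}+f_{j+3}-f_{j+4})+\alpha_j$ ($j=0,\dots,4$), $f_0+\dots+f_4=t$. A rational solution is a tuple of rational functions satisfying it. A rational solution is of Type A if either (A(1)) for some $i$, $f_i$ has a pole at $t=\infty$ and the other $f_j$ are regular there, or (A(2)) for some $i$, $f_i,f_{i+1},f_{i+3}$ have a pole at $t=\infty$ and $f_{i+2},f_{i+4}$ are regular there. *)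

theory Defs
  imports "HOL-Computational_Algebra.Polynomial" "HOL-Computational_Algebra.Fraction_Field"
begin

type_synonym rfun = "complex poly fract"

definition rvar :: rfun where "rvar = Fract [:0, 1:] 1"

definition rconst :: "complex \<Rightarrow> rfun" where "rconst c = Fract [:c:] 1"

text \<open>Derivative of a rational function via the quotient rule (independent of the representative).\<close>
definition rderiv :: "rfun \<Rightarrow> rfun" where
  "rderiv f = (SOME g. \<exists>p q. q \<noteq> 0 \<and> f = Fract p q \<and>
      g = Fract (pderiv p * q - p * pderiv q) (q * q))"

definition pole_at_inf :: "rfun \<Rightarrow> bool" where
  "pole_at_inf f \<longleftrightarrow> (\<exists>p q. q \<noteq> 0 \<and> f = Fract p q \<and> degree q < degree p)"

text \<open>Indices are taken modulo 5; only f 0, ..., f 4 matter.\<close>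
definition A4_solution :: "(nat \<Rightarrow> complex) \<Rightarrow> (nat \<Rightarrow> rfun) \<Rightarrow> bool" where
  "A4_solution \<alpha> f \<longleftrightarrow>
     (\<forall>j<5. rderiv (f j) =
        f j * (f ((j+1) mod 5) - f ((j+2) mod 5) + f ((j+3) mod 5) - f ((j+4) mod 5))
        + rconst (\<alpha> j)) \<and>
     f 0 + f 1 + f 2 + f 3 + f 4 = rvar"

definition typeA :: "(nat \<Rightarrow> rfun) \<Rightarrow> bool" where
  "typeA f \<longleftrightarrow>
     (\<exists>i<5. pole_at_inf (f i) \<and> (\<forall>j<5. j \<noteq> i \<longrightarrow> \<not> pole_at_inf (f j))) \<or>
     (\<exists>i<5. pole_at_inf (f i) \<and> pole_at_inf (f ((i+1) mod 5)) \<and> pole_at_inf (f ((i+3) mod 5))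
        \<and> \<not> pole_at_inf (f ((i+2) mod 5)) \<and> \<not> pole_at_inf (f ((i+4) mod 5)))"

end

theory Submission
  imports Defs "HOL-Computational_Algebra.Polynomial_Factorial" "HOL-Computational_Algebra.Field_as_Ring"
begin

lemma deriv_wd:
  fixes p q p2 q2 :: "complex poly"
  assumes h: "p * q2 = p2 * q"
  shows "(pderiv p * q - p * pderiv q) * (q2 * q2) = (pderiv p2 * q2 - p2 * pderiv q2) * (q * q)"
proof -
  have "pderiv (p * q2) = pderiv (p2 * q)" using h by simp
  hence h2: "p * pderiv q2 + q2 * pderiv p = p2 * pderiv q + q * pderiv p2"
    by (simp add: pderiv_mult)
  show ?thesis using h h2 by algebra
qed

lemma rderiv_Fract:
  assumes "q \<noteq> 0"
  shows "rderiv (Fract p q) = Fract (pderiv p * q - p * pderiv q) (q * q)"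
proof -
  let ?P = "\<lambda>g. \<exists>p2 q2. q2 \<noteq> 0 \<and> Fract p q = Fract p2 q2 \<and>
      g = Fract (pderiv p2 * q2 - p2 * pderiv q2) (q2 * q2)"
  have ex: "?P (Fract (pderiv p * q - p * pderiv q) (q * q))" using assms by blast
  have "?P (rderiv (Fract p q))" unfolding rderiv_def by (rule someI, rule ex)
  then obtain p2 q2 where q2: "q2 \<noteq> 0" and e: "Fract p q = Fract p2 q2"
    and g: "rderiv (Fract p q) = Fract (pderiv p2 * q2 - p2 * pderiv q2) (q2 * q2)" by blast
  from e have "p * q2 = p2 * q" using assms q2 by (simp add: eq_fract)
  hence "(pderiv p * q - p * pderiv q) * (q2 * q2) = (pderiv p2 * q2 - p2 * pderiv q2) * (q * q)"
    by (rule deriv_wd)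
  then show ?thesis using g assms q2 by (simp add: eq_fract)
qed

lemma rderiv_add: "rderiv (x + y) = rderiv x + rderiv y"
proof -
  obtain p q where x: "x = Fract p q" "q \<noteq> 0" by (cases x)
  obtain r s where y: "y = Fract r s" "s \<noteq> 0" by (cases y)
  show ?thesis using x y
    apply (simp add: rderiv_Fract eq_fract pderiv_add pderiv_mult pderiv_diff)
    apply (simp add: algebra_simps)
    done
qed

lemma rderiv_0: "rderiv 0 = 0"
  by (simp add: Zero_fract_def rderiv_Fract)

lemma rderiv_rvar: "rderiv rvar = 1"
  by (simp add: rvar_def rderiv_Fract One_fract_def pderiv_pCons pCons_one)

definition reg :: "rfun \<Rightarrow> bool" where
  "reg X \<longleftrightarrow> (\<exists>p q. q \<noteq> 0 \<and> X = Fract p q \<and> degree p \<le> degree q)"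

definition small :: "rfun \<Rightarrow> bool" where
  "small X \<longleftrightarrow> X = 0 \<or> (\<exists>p q. q \<noteq> 0 \<and> X = Fract p q \<and> degree p < degree q)"

lemma reg_0: "reg 0"
  unfolding reg_def by (rule exI[of _ 0], rule exI[of _ 1]) (simp add: Zero_fract_def)

lemma reg_add: assumes "reg X" "reg Y" shows "reg (X + Y)"
proof -
  obtain p q where x: "q \<noteq> 0" "X = Fract p q" "degree p \<le> degree q" using assms(1) reg_def by auto
  obtain r s where y: "s \<noteq> 0" "Y = Fract r s" "degree r \<le> degree s" using assms(2) reg_def by auto
  have "degree (p * s) \<le> degree q + degree s" using degree_mult_le[of p s] x by linarith
  moreover have "degree (r * q) \<le> degree q + degree s" using degree_mult_le[of r q] y by linarith
  ultimately have "degree (p * s + r * q) \<le> degree (q * s)"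
    using degree_add_le degree_mult_eq[of q s] x y by metis
  then show ?thesis unfolding reg_def using x y
    by (intro exI[of _ "p * s + r * q"] exI[of _ "q * s"]) simp
qed

lemma reg_uminus: assumes "reg X" shows "reg (- X)"
proof -
  obtain p q where x: "q \<noteq> 0" "X = Fract p q" "degree p \<le> degree q" using assms(1) reg_def by auto
  then show ?thesis unfolding reg_def
    by (intro exI[of _ "- p"] exI[of _ q]) simp
qed

lemma reg_diff: "reg X \<Longrightarrow> reg Y \<Longrightarrow> reg (X - Y)"
  using reg_add reg_uminus by (metis diff_conv_add_uminus)

lemma small_reg: assumes "small X" shows "reg X"
proof (cases "X = 0")
  case True then show ?thesis using reg_0 by simp
next
  case False
  then obtain p q where "q \<noteq> 0" "X = Fract p q" "degree p < degree q" using assms small_def by auto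
  then show ?thesis unfolding reg_def by (intro exI[of _ p] exI[of _ q]) simp
qed

lemma small_add: assumes "small X" "small Y" shows "small (X + Y)"
proof (cases "X = 0 \<or> Y = 0")
  case True then show ?thesis using assms by auto
next
  case False
  obtain p q where x: "q \<noteq> 0" "X = Fract p q" "degree p < degree q" using assms(1) False small_def by auto
  obtain r s where y: "s \<noteq> 0" "Y = Fract r s" "degree r < degree s" using assms(2) False small_def by auto
  have "degree (p * s) \<le> degree q + degree s - 1" using degree_mult_le[of p s] x by linarith
  moreover have "degree (r * q) \<le> degree q + degree s - 1" using degree_mult_le[of r q] y by linarith
  ultimately have "degree (p * s + r * q) \<le> degree q + degree s - 1"
    using degree_add_le by metis
  hence "degree (p * s + r * q) < degree (q * s)"
    using degree_mult_eq[of q s] x y by linarith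
  then show ?thesis unfolding small_def using x y
    by (intro disjI2 exI[of _ "p * s + r * q"] exI[of _ "q * s"]) simp
qed

lemma small_uminus: assumes "small X" shows "small (- X)"
proof (cases "X = 0")
  case True then show ?thesis by (simp add: small_def)
next
  case False
  obtain p q where x: "q \<noteq> 0" "X = Fract p q" "degree p < degree q" using assms(1) False small_def by auto
  then show ?thesis unfolding small_def
    by (intro disjI2 exI[of _ "- p"] exI[of _ q]) simp
qed

lemma small_diff: "small X \<Longrightarrow> small Y \<Longrightarrow> small (X - Y)"
  using small_add small_uminus by (metis diff_conv_add_uminus)

lemma pole_iff: "pole_at_inf X \<longleftrightarrow> \<not> reg X"
proof
  assume "pole_at_inf X"
  then obtain p q where x: "q \<noteq> 0" "X = Fract p q" "degree q < degree p" using pole_at_inf_def by auto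
  show "\<not> reg X"
  proof
    assume "reg X"
    then obtain r s where y: "s \<noteq> 0" "X = Fract r s" "degree r \<le> degree s" using reg_def by auto
    have e: "p * s = r * q" using x y by (simp add: eq_fract)
    have p0: "p \<noteq> 0" using x by auto
    hence r0: "r \<noteq> 0" using e x y by auto
    have "degree p + degree s = degree r + degree q" using e p0 r0 x y by (metis degree_mult_eq)
    then show False using x y by linarith
  qed
next
  assume "\<not> reg X"
  obtain p q where x: "X = Fract p q" "q \<noteq> 0" by (cases X)
  show "pole_at_inf X"
  proof (cases "degree q < degree p")
    case True then show ?thesis using x pole_at_inf_def by auto
  next
    case False then have "reg X" unfolding reg_def using x by (intro exI[of _ p] exI[of _ q]) simp
    then show ?thesis using \<open>\<not> reg X\<close> by simp
  qed
qed

lemma small_deriv: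
  assumes f0: "f \<noteq> 0" and e: "rderiv f = f * X"
  shows "small X"
proof -
  obtain p q where x: "f = Fract p q" "q \<noteq> 0" by (cases f)
  have p0: "p \<noteq> 0" using x f0 by (auto simp: fract_collapse)
  obtain r s where y: "X = Fract r s" "s \<noteq> 0" by (cases X)
  show ?thesis
  proof (cases "r = 0")
    case True then show ?thesis using y by (simp add: small_def fract_collapse)
  next
    case r0: False
    define N where "N = pderiv p * q - p * pderiv q"
    have "Fract N (q * q) = Fract (p * r) (q * s)"
      using e x y by (simp add: rderiv_Fract N_def)
    hence NE: "N * (q * s) = (p * r) * (q * q)" using x y by (simp add: eq_fract)
    hence N0: "N \<noteq> 0" using p0 r0 x y by auto
    have dp: "degree p + degree q \<ge> 1"
    proof (rule ccontr)
      assume "\<not> ?thesis"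
      hence "degree p = 0" "degree q = 0" by auto
      hence "pderiv p = 0" "pderiv q = 0" by (simp_all add: pderiv_eq_0_iff)
      then show False using N0 N_def by simp
    qed
    have b1: "degree (pderiv p * q) \<le> degree p + degree q - 1"
    proof (cases "degree p = 0")
      case True then have "pderiv p = 0" by (simp add: pderiv_eq_0_iff)
      then show ?thesis by simp
    next
      case False then show ?thesis using degree_mult_le[of "pderiv p" q] degree_pderiv[of p] by linarith
    qed
    have b2: "degree (p * pderiv q) \<le> degree p + degree q - 1"
    proof (cases "degree q = 0")
      case True then have "pderiv q = 0" by (simp add: pderiv_eq_0_iff)
      then show ?thesis by simp
    next
      case False then show ?thesis using degree_mult_le[of p "pderiv q"] degree_pderiv[of q] by linarith
    qed
    have dN: "degree N \<le> degree p + degree q - 1"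
      unfolding N_def using b1 b2 degree_diff_le by blast
    have "degree N + (degree q + degree s) = (degree p + degree r) + (degree q + degree q)"
      using NE N0 p0 r0 x y by (metis degree_mult_eq mult_eq_0_iff)
    hence "degree r < degree s" using dN dp by linarith
    then show ?thesis using y small_def by auto
  qed
qed

lemma coprime_rep: fixes X :: rfun obtains p q where "q \<noteq> 0" "coprime p q" "X = Fract p q"
proof -
  obtain p q where x: "X = Fract p q" "q \<noteq> 0" by (cases X)
  define g where "g = gcd p q"
  have g0: "g \<noteq> 0" using x g_def by simp
  have cp: "coprime (p div g) (q div g)" using div_gcd_coprime x g_def by blast
  have pq: "p = g * (p div g)" "q = g * (q div g)" using g_def by simp_all
  have q0: "q div g \<noteq> 0" using pq x by (metis mult_zero_right)
  have "X = Fract (p div g) (q div g)" using x pq g0 by (metis mult_fract_cancel)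
  then show ?thesis using that q0 cp by blast
qed

lemma riccati:
  assumes e: "rderiv h = Fract c 1 * (h * (rvar - h))"
  shows "\<not> pole_at_inf h"
proof
  assume pole: "pole_at_inf h"
  obtain p q where x: "q \<noteq> 0" "coprime p q" "h = Fract p q" by (rule coprime_rep)
  have "Fract (pderiv p * q - p * pderiv q) (q * q) = Fract (c * (p * ([:0,1:] * q - p))) (q * q)"
    using e x by (simp add: rderiv_Fract rvar_def)
  hence "pderiv p * q - p * pderiv q = c * (p * ([:0,1:] * q - p))" using x by (simp add: eq_fract)
  hence "pderiv p * q = p * (pderiv q + c * ([:0,1:] * q - p))" by (simp add: algebra_simps)
  hence "p dvd pderiv p * q" by simp
  hence dv: "p dvd pderiv p" using x by (metis coprime_dvd_mult_left_iff)
  have dp: "degree p = 0"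
  proof (rule ccontr)
    assume "degree p \<noteq> 0"
    hence "pderiv p \<noteq> 0" by (simp add: pderiv_eq_0_iff)
    hence "degree p \<le> degree (pderiv p)" using dv dvd_imp_degree_le by blast
    then show False using degree_pderiv[of p] \<open>degree p \<noteq> 0\<close> by linarith
  qed
  have "reg h" unfolding reg_def using x dp by (intro exI[of _ p] exI[of _ q]) simp
  then show False using pole pole_iff by simp
qed


lemma fract_m1: "Fract (-1) 1 = (-1 :: rfun)"
  by (simp add: One_fract_def)

lemma R1: "rderiv h = h * (rvar - h) \<Longrightarrow> reg h"
  using riccati[of h 1] by (simp add: fract_collapse pole_iff)

lemma R2: "rderiv h = - (h * (rvar - h)) \<Longrightarrow> reg h"
  using riccati[of h "-1"] by (simp add: fract_m1 pole_iff)

lemma LK: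
  assumes "rderiv g = g * S" "\<not> reg P" "S = P + Y \<or> S = Y - P" "reg Y"
  shows "g = 0"
proof (rule ccontr)
  assume "g \<noteq> 0"
  hence "reg S" using small_deriv small_reg assms(1) by blast
  have "P = S - Y \<or> P = Y - S" using assms(3) by auto
  then show False using reg_diff \<open>reg S\<close> assms by metis
qed

lemma LK2:
  assumes "rderiv g = g * S" "small T" "\<not> reg P" "S + T = P + Y \<or> S + T = Y - P" "reg Y"
  shows "g = 0"
proof (rule ccontr)
  assume "g \<noteq> 0"
  hence "small S" using small_deriv assms(1) by blast
  hence "reg (S + T)" using assms(2) small_add small_reg by blast
  have "P = (S + T) - Y \<or> P = Y - (S + T)" using assms(4) by auto
  then show False using reg_diff \<open>reg (S + T)\<close> assms by metis
qed

lemma SM: "rderiv g = g * S \<Longrightarrow> \<not> reg g \<Longrightarrow> small S"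
  by (metis small_deriv reg_0)

theorem lemma3p4:
  fixes f :: "nat \<Rightarrow> rfun"
  shows "(A4_solution (\<lambda>j. if j = 0 then 1 else 0) f \<and> typeA f) \<longleftrightarrow>
         (f 0 = rvar \<and> f 1 = 0 \<and> f 2 = 0 \<and> f 3 = 0 \<and> f 4 = 0)"
proof
  assume H: "A4_solution (\<lambda>j. if j = 0 then 1 else 0) f \<and> typeA f"
  have r1: "rconst 1 = 1" by (simp add: rconst_def pCons_one fract_collapse)
  have r0: "rconst 0 = 0" by (simp add: rconst_def fract_collapse)
  have E: "\<forall>j<5. rderiv (f j) =
        f j * (f ((j+1) mod 5) - f ((j+2) mod 5) + f ((j+3) mod 5) - f ((j+4) mod 5))
        + rconst ((\<lambda>j. if j = 0 then 1 else 0) j)" and sum: "f 0 + f 1 + f 2 + f 3 + f 4 = rvar"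
    using H unfolding A4_solution_def by blast+
  have e0: "rderiv (f 0) = f 0 * (f 1 - f 2 + f 3 - f 4) + 1"
  proof -
    have m: "(0+1) mod 5 = (1::nat)" "(0+2) mod 5 = (2::nat)" "(0+3) mod 5 = (3::nat)" "(0+4) mod 5 = (4::nat)" by simp_all
    show ?thesis using E[rule_format, of 0] r0 r1 unfolding m by simp
  qed
  have e1: "rderiv (f 1) = f 1 * (f 2 - f 3 + f 4 - f 0)"
  proof -
    have m: "(1+1) mod 5 = (2::nat)" "(1+2) mod 5 = (3::nat)" "(1+3) mod 5 = (4::nat)" "(1+4) mod 5 = (0::nat)" by simp_all
    show ?thesis using E[rule_format, of 1] r0 r1 unfolding m by simp
  qed
  have e2: "rderiv (f 2) = f 2 * (f 3 - f 4 + f 0 - f 1)"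
  proof -
    have m: "(2+1) mod 5 = (3::nat)" "(2+2) mod 5 = (4::nat)" "(2+3) mod 5 = (0::nat)" "(2+4) mod 5 = (1::nat)" by simp_all
    show ?thesis using E[rule_format, of 2] r0 r1 unfolding m by simp
  qed
  have e3: "rderiv (f 3) = f 3 * (f 4 - f 0 + f 1 - f 2)"
  proof -
    have m: "(3+1) mod 5 = (4::nat)" "(3+2) mod 5 = (0::nat)" "(3+3) mod 5 = (1::nat)" "(3+4) mod 5 = (2::nat)" by simp_all
    show ?thesis using E[rule_format, of 3] r0 r1 unfolding m by simp
  qed
  have e4: "rderiv (f 4) = f 4 * (f 0 - f 1 + f 2 - f 3)"
  proof -
    have m: "(4+1) mod 5 = (0::nat)" "(4+2) mod 5 = (1::nat)" "(4+3) mod 5 = (2::nat)" "(4+4) mod 5 = (3::nat)" by simp_all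
    show ?thesis using E[rule_format, of 4] r0 r1 unfolding m by simp
  qed
  have TA: "(\<exists>i<5. \<not> reg (f i) \<and> (\<forall>j<5. j \<noteq> i \<longrightarrow> reg (f j))) \<or>
     (\<exists>i<5. \<not> reg (f i) \<and> \<not> reg (f ((i+1) mod 5)) \<and> \<not> reg (f ((i+3) mod 5))
        \<and> reg (f ((i+2) mod 5)) \<and> reg (f ((i+4) mod 5)))"
    using H unfolding typeA_def pole_iff by blast
  note ri = reg_add reg_diff reg_uminus reg_0
  show "f 0 = rvar \<and> f 1 = 0 \<and> f 2 = 0 \<and> f 3 = 0 \<and> f 4 = 0"
  using TA proof
    assume "\<exists>i<5. \<not> reg (f i) \<and> (\<forall>j<5. j \<noteq> i \<longrightarrow> reg (f j))"
    then obtain i where i: "i < 5" "\<not> reg (f i)" "\<forall>j<5. j \<noteq> i \<longrightarrow> reg (f j)" by blast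
    have "i = 0 \<or> i = 1 \<or> i = 2 \<or> i = 3 \<or> i = 4" using i(1) by arith
    then show ?thesis
    proof (elim disjE)
      assume "i = 0"
      hence p: "\<not> reg (f 0)" and g: "reg (f 1)" "reg (f 2)" "reg (f 3)" "reg (f 4)" using i by auto
      have z1: "f 1 = 0" by (rule LK[OF e1 p, of "f 2 - f 3 + f 4"]; (simp add: algebra_simps; fail)?; intro ri g)
      have z2: "f 2 = 0" by (rule LK[OF e2 p, of "f 3 - f 4 - f 1"]; (simp add: algebra_simps; fail)?; intro ri g)
      have z3: "f 3 = 0" by (rule LK[OF e3 p, of "f 4 + f 1 - f 2"]; (simp add: algebra_simps; fail)?; intro ri g)
      have z4: "f 4 = 0" by (rule LK[OF e4 p, of "f 2 - f 1 - f 3"]; (simp add: algebra_simps; fail)?; intro ri g)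
      show ?thesis using sum z1 z2 z3 z4 by simp
    next
      assume "i = 1"
      hence p: "\<not> reg (f 1)" and g: "reg (f 0)" "reg (f 2)" "reg (f 3)" "reg (f 4)" using i by auto
      have z2: "f 2 = 0" by (rule LK[OF e2 p, of "f 3 - f 4 + f 0"]; (simp add: algebra_simps; fail)?; intro ri g)
      have z3: "f 3 = 0" by (rule LK[OF e3 p, of "f 4 - f 0 - f 2"]; (simp add: algebra_simps; fail)?; intro ri g)
      have z4: "f 4 = 0" by (rule LK[OF e4 p, of "f 0 + f 2 - f 3"]; (simp add: algebra_simps; fail)?; intro ri g)
      have "rderiv (f 1) = - (f 1 * (rvar - f 1))" using e1 sum z2 z3 z4 by algebra
      then show ?thesis using R2 p by blast
    next
      assume "i = 2"
      hence p: "\<not> reg (f 2)" and g: "reg (f 0)" "reg (f 1)" "reg (f 3)" "reg (f 4)" using i by auto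
      have z1: "f 1 = 0" by (rule LK[OF e1 p, of "- f 3 + f 4 - f 0"]; (simp add: algebra_simps; fail)?; intro ri g)
      have z3: "f 3 = 0" by (rule LK[OF e3 p, of "f 4 - f 0 + f 1"]; (simp add: algebra_simps; fail)?; intro ri g)
      have z4: "f 4 = 0" by (rule LK[OF e4 p, of "f 0 - f 1 - f 3"]; (simp add: algebra_simps; fail)?; intro ri g)
      have "rderiv (f 2) = f 2 * (rvar - f 2)" using e2 sum z1 z3 z4 by algebra
      then show ?thesis using R1 p by blast
    next
      assume "i = 3"
      hence p: "\<not> reg (f 3)" and g: "reg (f 0)" "reg (f 1)" "reg (f 2)" "reg (f 4)" using i by auto
      have z1: "f 1 = 0" by (rule LK[OF e1 p, of "f 2 + f 4 - f 0"]; (simp add: algebra_simps; fail)?; intro ri g)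
      have z2: "f 2 = 0" by (rule LK[OF e2 p, of "- f 4 + f 0 - f 1"]; (simp add: algebra_simps; fail)?; intro ri g)
      have z4: "f 4 = 0" by (rule LK[OF e4 p, of "f 0 - f 1 + f 2"]; (simp add: algebra_simps; fail)?; intro ri g)
      have "rderiv (f 3) = - (f 3 * (rvar - f 3))" using e3 sum z1 z2 z4 by algebra
      then show ?thesis using R2 p by blast
    next
      assume "i = 4"
      hence p: "\<not> reg (f 4)" and g: "reg (f 0)" "reg (f 1)" "reg (f 2)" "reg (f 3)" using i by auto
      have z1: "f 1 = 0" by (rule LK[OF e1 p, of "f 2 - f 3 - f 0"]; (simp add: algebra_simps; fail)?; intro ri g)
      have z2: "f 2 = 0" by (rule LK[OF e2 p, of "f 3 + f 0 - f 1"]; (simp add: algebra_simps; fail)?; intro ri g)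
      have z3: "f 3 = 0" by (rule LK[OF e3 p, of "- f 0 + f 1 - f 2"]; (simp add: algebra_simps; fail)?; intro ri g)
      have "rderiv (f 4) = f 4 * (rvar - f 4)" using e4 sum z1 z2 z3 by algebra
      then show ?thesis using R1 p by blast
    qed
  next
    assume "\<exists>i<5. \<not> reg (f i) \<and> \<not> reg (f ((i+1) mod 5)) \<and> \<not> reg (f ((i+3) mod 5))
        \<and> reg (f ((i+2) mod 5)) \<and> reg (f ((i+4) mod 5))"
    then obtain i where i: "i < 5" "\<not> reg (f i)" "\<not> reg (f ((i+1) mod 5))" "\<not> reg (f ((i+3) mod 5))"
        "reg (f ((i+2) mod 5))" "reg (f ((i+4) mod 5))" by blast
    have "i = 0 \<or> i = 1 \<or> i = 2 \<or> i = 3 \<or> i = 4" using i(1) by arith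
    then show ?thesis
    proof (elim disjE)
      assume ik: "i = 0"
      have m: "(0+1) mod 5 = (1::nat)" "(0+2) mod 5 = (2::nat)" "(0+3) mod 5 = (3::nat)" "(0+4) mod 5 = (4::nat)" by simp_all
      have p: "\<not> reg (f 0)" "\<not> reg (f 1)" "\<not> reg (f 3)" and g: "reg (f 2)" "reg (f 4)" using i unfolding ik m by simp_all
      have s1: "small (f 2 - f 3 + f 4 - f 0)" using SM[OF e1 p(2)] .
      have s3: "small (f 4 - f 0 + f 1 - f 2)" using SM[OF e3 p(3)] .
      have z2: "f 2 = 0" by (rule LK2[OF e2 s1 p(2), of "f 2"]; (simp add: algebra_simps; fail)?; intro ri g)
      have z4: "f 4 = 0" by (rule LK2[OF e4 s3 p(3), of "f 4"]; (simp add: algebra_simps; fail)?; intro ri g)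
      have r: "rvar - f 1 = f 0 + f 3" using sum z2 z4 by (simp add: algebra_simps flip: sum)
      have "rderiv (f 1) = - (f 1 * (rvar - f 1))" unfolding r e1 z2 z4 by (simp add: algebra_simps)
      then show ?thesis using R2 p by blast
    next
      assume ik: "i = 1"
      have m: "(1+1) mod 5 = (2::nat)" "(1+2) mod 5 = (3::nat)" "(1+3) mod 5 = (4::nat)" "(1+4) mod 5 = (0::nat)" by simp_all
      have p: "\<not> reg (f 1)" "\<not> reg (f 2)" "\<not> reg (f 4)" and g: "reg (f 3)" "reg (f 0)" using i unfolding ik m by simp_all
      have s2: "small (f 3 - f 4 + f 0 - f 1)" using SM[OF e2 p(2)] .
      have z3: "f 3 = 0" by (rule LK2[OF e3 s2 p(2), of "f 3"]; (simp add: algebra_simps; fail)?; intro ri g)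
      have "rderiv (f 2 + f 4) = (f 2 + f 4) * (f 0 - f 1)"
        unfolding rderiv_add e2 e4 z3 by (simp add: algebra_simps)
      hence Y: "f 2 + f 4 = 0" by (rule LK[OF _ p(1), where Y = "f 0"]; (simp add: algebra_simps; fail)?; intro ri g)
      hence f4: "f 4 = - f 2" by (simp add: add_eq_0_iff2)
      have r: "rvar - f 1 = f 0" using sum z3 Y by (simp add: algebra_simps flip: sum)
      have "rderiv (f 1) = - (f 1 * (rvar - f 1))" unfolding r e1 z3 f4 by (simp add: algebra_simps)
      then show ?thesis using R2 p by blast
    next
      assume ik: "i = 2"
      have m: "(2+1) mod 5 = (3::nat)" "(2+2) mod 5 = (4::nat)" "(2+3) mod 5 = (0::nat)" "(2+4) mod 5 = (1::nat)" by simp_all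
      have p: "\<not> reg (f 2)" "\<not> reg (f 3)" "\<not> reg (f 0)" and g: "reg (f 4)" "reg (f 1)" using i unfolding ik m by simp_all
      have s2: "small (f 3 - f 4 + f 0 - f 1)" using SM[OF e2 p(1)] .
      have s3: "small (f 4 - f 0 + f 1 - f 2)" using SM[OF e3 p(2)] .
      have z1: "f 1 = 0" by (rule LK2[OF e1 s2 p(1), of "- f 1"]; (simp add: algebra_simps; fail)?; intro ri g)
      have z4: "f 4 = 0" by (rule LK2[OF e4 s3 p(2), of "f 4"]; (simp add: algebra_simps; fail)?; intro ri g)
      have r: "rvar - f 2 = f 0 + f 3" using sum z1 z4 by (simp add: algebra_simps flip: sum)
      have "rderiv (f 2) = f 2 * (rvar - f 2)" unfolding r e2 z1 z4 by (simp add: algebra_simps)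
      then show ?thesis using R1 p by blast
    next
      assume ik: "i = 3"
      have m: "(3+1) mod 5 = (4::nat)" "(3+2) mod 5 = (0::nat)" "(3+3) mod 5 = (1::nat)" "(3+4) mod 5 = (2::nat)" by simp_all
      have p: "\<not> reg (f 3)" "\<not> reg (f 4)" "\<not> reg (f 1)" and g: "reg (f 0)" "reg (f 2)" using i unfolding ik m by simp_all
      have s1: "small (f 2 - f 3 + f 4 - f 0)" using SM[OF e1 p(3)] .
      have z2: "f 2 = 0" by (rule LK2[OF e2 s1 p(3), of "f 2"]; (simp add: algebra_simps; fail)?; intro ri g)
      have "rderiv (f 3 + f 1) = (f 3 + f 1) * (f 4 - f 0)"
        unfolding rderiv_add e3 e1 z2 by (simp add: algebra_simps)
      hence Y: "f 3 + f 1 = 0" by (rule LK[OF _ p(2), where Y = "- f 0"]; (simp add: algebra_simps; fail)?; intro ri g)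
      hence f1: "f 1 = - f 3" by (simp add: add_eq_0_iff2 add.commute)
      have r: "rvar - f 4 = f 0" using sum z2 Y by (simp add: algebra_simps flip: sum)
      have "rderiv (f 4) = f 4 * (rvar - f 4)" unfolding r e4 z2 f1 by (simp add: algebra_simps)
      then show ?thesis using R1 p by blast
    next
      assume ik: "i = 4"
      have m: "(4+1) mod 5 = (0::nat)" "(4+2) mod 5 = (1::nat)" "(4+3) mod 5 = (2::nat)" "(4+4) mod 5 = (3::nat)" by simp_all
      have p: "\<not> reg (f 4)" "\<not> reg (f 0)" "\<not> reg (f 2)" and g: "reg (f 1)" "reg (f 3)" using i unfolding ik m by simp_all
      have s2: "small (f 3 - f 4 + f 0 - f 1)" using SM[OF e2 p(3)] .
      have z1: "f 1 = 0" by (rule LK2[OF e1 s2 p(3), of "- f 1"]; (simp add: algebra_simps; fail)?; intro ri g)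
      have z3: "f 3 = 0" by (rule LK2[OF e3 s2 p(3), of "f 3"]; (simp add: algebra_simps; fail)?; intro ri g)
      have r: "rvar - f 4 = f 0 + f 2" using sum z1 z3 by (simp add: algebra_simps flip: sum)
      have "rderiv (f 4) = f 4 * (rvar - f 4)" unfolding r e4 z1 z3 by (simp add: algebra_simps)
      then show ?thesis using R1 p by blast
    qed
  qed
next
  assume H: "f 0 = rvar \<and> f 1 = 0 \<and> f 2 = 0 \<and> f 3 = 0 \<and> f 4 = 0"
  have r1: "rconst 1 = 1" by (simp add: rconst_def pCons_one fract_collapse)
  have r0: "rconst 0 = 0" by (simp add: rconst_def fract_collapse)
  have z: "f (Suc 0) = 0" "f (Suc (Suc 0)) = 0" "f (Suc (Suc (Suc 0))) = 0" "f (Suc (Suc (Suc (Suc 0)))) = 0"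
    using H by (simp_all add: eval_nat_numeral)
  have sol: "A4_solution (\<lambda>j. if j = 0 then 1 else 0) f"
    unfolding A4_solution_def
  proof (intro conjI allI impI)
    fix j :: nat assume "j < 5"
    hence "j = 0 \<or> j = 1 \<or> j = 2 \<or> j = 3 \<or> j = 4" by arith
    then show "rderiv (f j) =
        f j * (f ((j+1) mod 5) - f ((j+2) mod 5) + f ((j+3) mod 5) - f ((j+4) mod 5))
        + rconst ((\<lambda>j. if j = 0 then 1 else 0) j)"
      using H r0 r1 z by (auto simp: rderiv_rvar rderiv_0)
  next
    show "f 0 + f 1 + f 2 + f 3 + f 4 = rvar" using H by simp
  qed
  have "\<not> reg rvar"
  proof -
    have "pole_at_inf rvar" unfolding pole_at_inf_def rvar_def
      by (intro exI[of _ "[:0,1:]"] exI[of _ 1]) simp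
    then show ?thesis using pole_iff by simp
  qed
  hence "typeA f" unfolding typeA_def pole_iff using H z reg_0
    by (intro disjI1 exI[of _ 0]) (auto simp: less_Suc_eq eval_nat_numeral)
  then show "A4_solution (\<lambda>j. if j = 0 then 1 else 0) f \<and> typeA f" using sol by simp
qed

end
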